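(* Let $\mathcal{M}$ be a $W^*$-algebra, $p\in\mathcal{M}$ a projection and $u\in\mathcal{M}$ a unitary. The set $\mathcal{S}_{\langle p,u\rangle}$ of all finite products of $p$, $u$ and $u^*$ is an inverse semigroup if and only if $[p,u^kpu^{*k}]=0$ for all $k\in\mathbb{N}$.
   Context: $[a,b]=ab-ba$. An inverse semigroup is a semigroup in which each $s$ has a unique $t$ with $sts=s$, $tst=t$. *)

theory Defs
  imports "HOL-Analysis.Analysis"
begin

text \<open>A complex Banach algebra is encoded as a real Banach algebra with unit together with a
central element iu (playing the role of i*1) with iu*iu = -1; complex scalar multiplication is
then c.x = Re c *R x + Im c *R (iu * x), and we require it to be norm-homogeneous.
The unit is not required to be non-zero, so the zero algebra is allowed.\<close>

class cstar_algebra = real_normed_algebra + monoid_mult + banach +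
  fixes adj :: "'a \<Rightarrow> 'a" and iu :: 'a
  assumes adj_adj: "adj (adj x) = x"
    and adj_add: "adj (x + y) = adj x + adj y"
    and adj_mult: "adj (x * y) = adj y * adj x"
    and adj_scaleR: "adj (r *\<^sub>R x) = r *\<^sub>R adj x"
    and adj_iu: "adj iu = - iu"
    and iu_square: "iu * iu = - 1"
    and iu_central: "iu * x = x * iu"
    and norm_scaleC: "norm (Re c *\<^sub>R x + Im c *\<^sub>R (iu * x)) = cmod c * norm x"
    and cstar_identity: "norm (adj x * x) = norm x ^ 2"

definition scaleC :: "complex \<Rightarrow> 'a::cstar_algebra \<Rightarrow> 'a" where
  "scaleC c x = Re c *\<^sub>R x + Im c *\<^sub>R (iu * x)"

text \<open>A W*-algebra is a C*-algebra that is (isometrically isomorphic to) the dual of a Banach space.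
Equivalently: there is a linear subspace F of the continuous complex-linear functionals on M such
that the canonical map M \<rightarrow> F*, x \<mapsto> (\<phi> \<mapsto> \<phi> x), is isometric and onto.
(Closedness of F is immaterial since F* equals the dual of its closure.)\<close>

definition wstar_algebra :: "'a::cstar_algebra itself \<Rightarrow> bool" where
  "wstar_algebra _ \<longleftrightarrow>
    (\<exists>F :: ('a \<Rightarrow> complex) set.
       (\<forall>\<phi>\<in>F. bounded_linear \<phi> \<and> (\<forall>x. \<phi> (iu * x) = \<i> * \<phi> x)) \<and>
       (\<lambda>_. 0) \<in> F \<and>
       (\<forall>\<phi>\<in>F. \<forall>\<psi>\<in>F. \<forall>c. (\<lambda>x. \<phi> x + c * \<psi> x) \<in> F) \<and>
       (\<forall>x. norm x = (SUP \<phi>\<in>{\<phi>\<in>F. onorm \<phi> \<le> 1}. cmod (\<phi> x))) \<and>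
       (\<forall>\<Psi>. ((\<forall>\<phi>\<in>F. \<forall>\<psi>\<in>F. \<forall>c. \<Psi> (\<lambda>x. \<phi> x + c * \<psi> x) = \<Psi> \<phi> + c * \<Psi> \<psi>) \<and>
              (\<exists>C. \<forall>\<phi>\<in>F. cmod (\<Psi> \<phi>) \<le> C * onorm \<phi>))
            \<longrightarrow> (\<exists>x. \<forall>\<phi>\<in>F. \<Psi> \<phi> = \<phi> x)))"

definition commutator :: "'a::ring \<Rightarrow> 'a \<Rightarrow> 'a" where
  "commutator a b = a * b - b * a"

definition finite_products :: "'a::monoid_mult set \<Rightarrow> 'a set" where
  "finite_products G = {prod_list xs | xs. xs \<noteq> [] \<and> set xs \<subseteq> G}"

definition inverse_semigroup :: "'a::semigroup_mult set \<Rightarrow> bool" where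
  "inverse_semigroup S \<longleftrightarrow> (\<forall>x\<in>S. \<forall>y\<in>S. x * y \<in> S) \<and>
     (\<forall>s\<in>S. \<exists>!t. t \<in> S \<and> s * t * s = s \<and> t * s * t = t)"

end

theory Submission
  imports Defs
begin

lemma adj_one: "adj (1::'a::cstar_algebra) = 1"
  using adj_mult[of "adj 1" "1::'a"] by (simp add: adj_adj)

lemma adj_power: "adj ((x::'a::cstar_algebra) ^ n) = adj x ^ n"
  by (induction n) (auto simp: adj_one adj_mult power_commutes)

lemma adj_prod_list: "adj (prod_list (xs::'a::cstar_algebra list)) = prod_list (rev (map adj xs))"
  by (induction xs) (auto simp: adj_one adj_mult)

lemma assoc3: "(a::'a::semigroup_mult) * b * c = d \<Longrightarrow> a * (b * (c * x)) = d * x"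
proof -
  assume eq: "a * b * c = d"
  have "a * (b * (c * x)) = (a * b * c) * x" by (simp only: mult.assoc)
  then show ?thesis using eq by simp
qed

lemma assoc3': "(a::'a::semigroup_mult) * b * c = d \<Longrightarrow> a * (b * c) = d"
  by (simp add: mult.assoc)

lemma assoc2: "(a::'a::semigroup_mult) * a = a \<Longrightarrow> a * (a * x) = a * x"
proof -
  assume eq: "a * a = a"
  have "a * (a * x) = (a * a) * x" by (simp only: mult.assoc)
  then show ?thesis using eq by simp
qed

lemma inv_uniq:
  fixes S :: "'a::semigroup_mult set"
  assumes cl: "\<forall>x\<in>S. \<forall>y\<in>S. x * y \<in> S"
    and ic: "\<forall>e\<in>S. \<forall>f\<in>S. e * e = e \<longrightarrow> f * f = f \<longrightarrow> e * f = f * e"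
    and sS: "s \<in> S" and tS: "t \<in> S" and t'S: "t' \<in> S"
    and h: "s * t * s = s" "t * s * t = t" "s * t' * s = s" "t' * s * t' = t'"
  shows "t = t'"
proof -
  note hr = assoc3[OF h(1)] assoc3[OF h(2)] assoc3[OF h(3)] assoc3[OF h(4)]
    assoc3'[OF h(1)] assoc3'[OF h(2)] assoc3'[OF h(3)] assoc3'[OF h(4)]
  have i1: "(t * s) * (t * s) = t * s" by (simp add: mult.assoc hr)
  have i2: "(t' * s) * (t' * s) = t' * s" by (simp add: mult.assoc hr)
  have i3: "(s * t) * (s * t) = s * t" by (simp add: mult.assoc hr)
  have i4: "(s * t') * (s * t') = s * t'" by (simp add: mult.assoc hr)
  have c1: "(t * s) * (t' * s) = (t' * s) * (t * s)"
    using ic cl sS tS t'S i1 i2 by blast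
  have c2: "(s * t) * (s * t') = (s * t') * (s * t)"
    using ic cl sS tS t'S i3 i4 by blast
  have "t = (t * s) * (t' * s) * t" by (simp add: mult.assoc hr)
  also have "\<dots> = (t' * s) * (t * s) * t" using c1 by simp
  also have "\<dots> = t' * s * t" by (simp add: mult.assoc hr)
  finally have A: "t = t' * s * t" .
  have "t' = t' * (s * t) * (s * t')" by (simp add: mult.assoc hr)
  also have "\<dots> = t' * (s * t') * (s * t)" using c2 by (simp add: mult.assoc)
  also have "\<dots> = t' * s * t" by (simp add: mult.assoc hr)
  finally show ?thesis using A by simp
qed

lemma idem_comm:
  fixes S :: "'a::semigroup_mult set"
  assumes inv: "inverse_semigroup S" and eS: "e \<in> S" and fS: "f \<in> S"
    and ee: "e * e = e" and ff: "f * f = f"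
  shows "e * f = f * e"
proof -
  have cl: "\<And>x y. x \<in> S \<Longrightarrow> y \<in> S \<Longrightarrow> x * y \<in> S" using inv unfolding inverse_semigroup_def by blast
  have uq: "t = t'" if "s \<in> S" "t \<in> S" "t' \<in> S" "s * t * s = s" "t * s * t = t"
     "s * t' * s = s" "t' * s * t' = t'" for s t t'
  proof -
    have "\<exists>!t. t \<in> S \<and> s * t * s = s \<and> t * s * t = t" using inv that(1) unfolding inverse_semigroup_def by blast
    then obtain w where "\<forall>y. (y \<in> S \<and> s * y * s = s \<and> y * s * y = y) \<longrightarrow> y = w" by blast
    then show ?thesis using that by blast
  qed
  have ex: "\<And>s. s \<in> S \<Longrightarrow> \<exists>t. t \<in> S \<and> s * t * s = s \<and> t * s * t = t"
    using inv unfolding inverse_semigroup_def by blast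
  have ee': "e * (e * z) = e * z" for z using ee by (rule assoc2)
  have ff': "f * (f * z) = f * z" for z using ff by (rule assoc2)
  have idem: "(a * b) * (a * b) = a * b" if aS: "a \<in> S" and bS: "b \<in> S"
    and aa: "a * a = a" and bb: "b * b = b" for a b
  proof -
    have aa': "a * (a * z) = a * z" for z using aa by (rule assoc2)
    have bb': "b * (b * z) = b * z" for z using bb by (rule assoc2)
    have abS: "a * b \<in> S" using cl aS bS .
    obtain x where x: "x \<in> S" "a * b * x * (a * b) = a * b" "x * (a * b) * x = x" using ex[OF abS] by blast
    have yS: "b * x * a \<in> S" using cl[OF cl[OF bS x(1)] aS] .
    have y1: "a * b * (b * x * a) * (a * b) = a * b"
      using x(2) by (simp add: mult.assoc aa' bb')
    have y2: "b * x * a * (a * b) * (b * x * a) = b * x * a"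
    proof -
      have "b * x * a * (a * b) * (b * x * a) = b * (x * (a * b) * x) * a"
        by (simp add: mult.assoc aa' bb')
      then show ?thesis using x(3) by simp
    qed
    have xy: "x = b * x * a" using uq[OF abS x(1) yS] x y1 y2 by blast
    have xx: "x * x = x"
    proof -
      have "x * x = b * x * a * (b * x * a)" using xy by simp
      also have "\<dots> = b * (x * (a * b) * x) * a" by (simp add: mult.assoc)
      finally show ?thesis using x(3) xy by simp
    qed
    have xxx: "x * x * x = x" using xx by simp
    have "a * b = x" using uq[OF x(1) abS x(1) x(3) x(2) xxx xxx] .
    then show ?thesis using xx by simp
  qed
  have efS: "e * f \<in> S" and feS: "f * e \<in> S" using cl eS fS by auto
  have ief: "(e * f) * (e * f) = e * f" using idem[OF eS fS ee ff] .
  have ife: "(f * e) * (f * e) = f * e" using idem[OF fS eS ff ee] .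
  have "f * e = e * f"
  proof (rule uq[OF efS feS efS])
    show "e * f * (f * e) * (e * f) = e * f" using ief by (simp add: mult.assoc ff' ee')
    show "f * e * (e * f) * (f * e) = f * e" using ife by (simp add: mult.assoc ff' ee')
    show "e * f * (e * f) * (e * f) = e * f" using ief by simp
    show "e * f * (e * f) * (e * f) = e * f" using ief by simp
  qed
  then show ?thesis by simp
qed

definition uz :: "'a::cstar_algebra \<Rightarrow> int \<Rightarrow> 'a" where
  "uz u k = (if k \<ge> 0 then u ^ nat k else adj u ^ nat (-k))"

locale unitary =
  fixes u :: "'a::cstar_algebra"
  assumes l: "adj u * u = 1" and r: "u * adj u = 1"
begin

lemma pow_r: "u ^ n * adj u ^ n = 1"
proof (induction n)
  case (Suc n)
  have a: "u ^ Suc n = u ^ n * u" by (rule power_Suc2)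
  have b: "adj u ^ Suc n = adj u * adj u ^ n" by (rule power_Suc)
  have "u ^ Suc n * adj u ^ Suc n = u ^ n * (u * adj u) * adj u ^ n"
    by (simp only: a b mult.assoc)
  then show ?case using Suc r by simp
qed simp

lemma pow_l: "adj u ^ n * u ^ n = 1"
proof (induction n)
  case (Suc n)
  have a: "adj u ^ Suc n = adj u ^ n * adj u" by (rule power_Suc2)
  have b: "u ^ Suc n = u * u ^ n" by (rule power_Suc)
  have "adj u ^ Suc n * u ^ Suc n = adj u ^ n * (adj u * u) * u ^ n"
    by (simp only: a b mult.assoc)
  then show ?case using Suc l by simp
qed simp

lemma uz0[simp]: "uz u 0 = 1" by (simp add: uz_def)

lemma uz_plus1: "uz u (k + 1) = uz u k * u"
proof (cases "k \<ge> 0")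
  case True
  then have "nat (k+1) = Suc (nat k)" by simp
  then show ?thesis using True by (simp add: uz_def power_commutes)
next
  case False
  define m where "m = nat (-k) - 1"
  have m: "nat (-k) = Suc m" "nat (-(k+1)) = m" using False by (auto simp: m_def)
  show ?thesis
  proof (cases "k + 1 \<ge> 0")
    case True
    then have "k = -1" using False by simp
    then show ?thesis by (simp add: uz_def l)
  next
    case F2: False
    have "adj u ^ Suc m * u = adj u ^ m * (adj u * u)" by (simp only: power_Suc2 mult.assoc)
    then show ?thesis using False F2 m by (simp add: uz_def l)
  qed
qed

lemma uz_minus1: "uz u (k - 1) = uz u k * adj u"
proof -
  have "uz u (k - 1) * u * adj u = uz u (k-1)" by (simp add: mult.assoc r)
  then show ?thesis using uz_plus1[of "k-1"] by simp
qed

lemma uz_add: "uz u (a + b) = uz u a * uz u b"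
proof (induction b rule: int_induct[where k=0])
  case base then show ?case by simp
next
  case (step1 i)
  have "uz u (a + (i+1)) = uz u ((a+i)+1)" by (simp add: add.assoc)
  then show ?case using step1 by (simp add: uz_plus1 mult.assoc)
next
  case (step2 i)
  have "uz u (a + (i-1)) = uz u ((a+i)-1)" by (rule arg_cong[where f="uz u"]) simp
  then show ?case using step2 by (simp add: uz_minus1 mult.assoc)
qed

lemma uz_inv1[simp]: "uz u k * uz u (-k) = 1"
  using uz_add[of k "-k"] by simp

lemma uz_inv2[simp]: "uz u (-k) * uz u k = 1"
  using uz_add[of "-k" k] by simp

lemma uz_inv1'[simp]: "uz u k * (uz u (-k) * x) = x"
  by (simp add: uz_inv1 flip: mult.assoc)

lemma uz_inv2'[simp]: "uz u (-k) * (uz u k * x) = x"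
  by (simp add: uz_inv2 flip: mult.assoc)

lemma adj_uz: "adj (uz u k) = uz u (-k)"
  by (simp add: uz_def adj_power adj_adj adj_one)

lemma uz1: "uz u 1 = u" by (simp add: uz_def)
lemma uzm1: "uz u (-1) = adj u" by (simp add: uz_def)

end

inductive_set EE :: "'a::cstar_algebra \<Rightarrow> 'a \<Rightarrow> 'a set" for u p where
  one: "1 \<in> EE u p"
| pm: "e \<in> EE u p \<Longrightarrow> p * e \<in> EE u p"
| cj: "e \<in> EE u p \<Longrightarrow> uz u k * e * uz u (-k) \<in> EE u p"

locale setting = unitary +
  fixes p :: "'a::cstar_algebra"
  assumes sa: "adj p = p" and idem: "p * p = p"
    and H: "\<And>k. p * (uz u k * p * uz u (-k)) = (uz u k * p * uz u (-k)) * p"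
begin

abbreviation "pk k \<equiv> uz u k * p * uz u (-k)"

lemma pk_shift: "pk k * uz u j = uz u j * pk (k - j)"
proof -
  have "uz u k = uz u j * uz u (k-j)" using uz_add[of j "k-j"] by simp
  moreover have "uz u (-k) * uz u j = uz u (-(k-j))" using uz_add[of "-k" j] by simp
  ultimately show ?thesis by (simp add: mult.assoc)
qed

lemma pk_comm: "f \<in> EE u p \<Longrightarrow> pk k * f = f * pk k"
proof (induction f arbitrary: k rule: EE.induct)
  case one then show ?case by simp
next
  case (pm e)
  have "pk k * (p * e) = (pk k * p) * e" by (simp add: mult.assoc)
  also have "\<dots> = (p * pk k) * e" using H[of k] by simp
  also have "\<dots> = p * (pk k * e)" by (simp only: mult.assoc)
  also have "\<dots> = (p * e) * pk k" using pm by (simp add: mult.assoc)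
  finally show ?case .
next
  case (cj e j)
  have "pk k * (uz u j * e * uz u (- j)) = (pk k * uz u j) * e * uz u (- j)" by (simp add: mult.assoc)
  also have "\<dots> = uz u j * (pk (k - j) * e) * uz u (- j)" by (simp only: pk_shift) (simp only: mult.assoc)
  also have "\<dots> = uz u j * e * (pk (k - j) * uz u (- j))"
  proof -
    have ih: "pk (k-j) * e = e * pk (k-j)" by (rule cj.IH)
    show ?thesis by (simp only: ih) (simp only: mult.assoc)
  qed
  also have "\<dots> = uz u j * e * uz u (-j) * pk k" using pk_shift[of "k-j" "-j"] by (simp add: mult.assoc)
  finally show ?case .
qed

lemma p_in: "p \<in> EE u p" using EE.pm[OF EE.one] by simp

lemma conj_in: "e \<in> EE u p \<Longrightarrow> uz u (-k) * e * uz u k \<in> EE u p"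
  using EE.cj[of e u p "-k"] by simp

lemma E_comm: "e \<in> EE u p \<Longrightarrow> f \<in> EE u p \<Longrightarrow> e * f = f * e"
proof (induction e arbitrary: f rule: EE.induct)
  case one then show ?case by simp
next
  case (pm e)
  have "p * f = f * p" using pk_comm[OF pm(3), of 0] by simp
  then show ?case using pm by (metis mult.assoc)
next
  case (cj e j)
  have i: "uz u (-j) * f * uz u j \<in> EE u p" using conj_in[OF cj(3)] .
  have "uz u j * e * uz u (- j) * f = uz u j * (e * (uz u (-j) * f * uz u j)) * uz u (-j)"
    by (simp add: mult.assoc uz_inv2)
  also have "\<dots> = uz u j * ((uz u (-j) * f * uz u j) * e) * uz u (-j)" using cj(2)[OF i] by simp
  also have "\<dots> = f * (uz u j * e * uz u (- j))"
    by (simp add: mult.assoc uz_inv1 flip: mult.assoc[of "uz u j" "uz u (-j)"])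
  finally show ?case .
qed

lemma E_mult: "e \<in> EE u p \<Longrightarrow> f \<in> EE u p \<Longrightarrow> e * f \<in> EE u p"
proof (induction e arbitrary: f rule: EE.induct)
  case one then show ?case by simp
next
  case (pm e)
  then show ?case using EE.pm by (metis mult.assoc)
next
  case (cj e j)
  have i: "uz u (-j) * f * uz u j \<in> EE u p" using conj_in[OF cj(3)] .
  have "uz u j * e * uz u (- j) * f = uz u j * (e * (uz u (-j) * f * uz u j)) * uz u (-j)"
    by (simp add: mult.assoc uz_inv2)
  then show ?case using EE.cj[OF cj(2)[OF i]] by simp
qed

lemma E_proj: "e \<in> EE u p \<Longrightarrow> adj e = e \<and> e * e = e"
proof (induction e rule: EE.induct)
  case one then show ?case by (simp add: adj_one)
next
  case (pm e)
  have c: "p * e = e * p" using E_comm[OF p_in pm(1)] .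
  have "adj (p * e) = p * e" using pm c by (simp add: adj_mult sa)
  moreover have "p * e * (p * e) = p * e"
  proof -
    have "p * e * (p * e) = p * (e * p) * e" by (simp only: mult.assoc)
    also have "\<dots> = p * (p * e) * e" by (simp only: c)
    also have "\<dots> = (p * p) * (e * e)" by (simp only: mult.assoc)
    finally show ?thesis using idem pm.IH by simp
  qed
  ultimately show ?case by simp
next
  case (cj e k)
  have "adj (uz u k * e * uz u (- k)) = uz u k * e * uz u (- k)"
    using cj by (simp add: adj_mult adj_uz mult.assoc)
  moreover have "uz u k * e * uz u (- k) * (uz u k * e * uz u (- k)) = uz u k * e * uz u (- k)"
  proof -
    have ee: "e * (e * x) = e * x" for x using cj by (metis mult.assoc)
    show ?thesis by (simp add: mult.assoc ee)
  qed
  ultimately show ?case by simp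
qed

abbreviation "S \<equiv> finite_products {p, u, adj u}"

lemma nf: "set xs \<subseteq> {p, u, adj u} \<Longrightarrow> \<exists>e n. e \<in> EE u p \<and> prod_list xs = e * uz u n"
proof (induction xs)
  case Nil
  have "prod_list [] = 1 * uz u 0" by simp
  then show ?case using EE.one by blast
next
  case (Cons x xs)
  then obtain e n where en: "e \<in> EE u p" "prod_list xs = e * uz u n" by auto
  have x: "x = p \<or> x = u \<or> x = adj u" using Cons.prems by auto
  moreover
  { assume xp: "x = p"
    have "prod_list (x # xs) = (p * e) * uz u n" using en xp by (simp add: mult.assoc)
    then have ?case using EE.pm[OF en(1)] by blast }
  moreover
  { assume xu: "x = u"
    have "uz u (-1) * uz u (n+1) = uz u n" using uz_add[of "-1" "n+1"] by simp
    then have "u * (e * uz u n) = (uz u 1 * e * uz u (-1)) * uz u (n+1)"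
      by (simp add: uz1 mult.assoc)
    then have "prod_list (x # xs) = (uz u 1 * e * uz u (-1)) * uz u (n+1)" using en xu by simp
    then have ?case using EE.cj[OF en(1), of 1] by blast }
  moreover
  { assume xu: "x = adj u"
    have "uz u 1 * uz u (n-1) = uz u n" using uz_add[of "1" "n-1"] by simp
    then have "adj u * (e * uz u n) = (uz u (-1) * e * uz u (- (-1))) * uz u (n-1)"
      by (simp add: uzm1 mult.assoc)
    then have "prod_list (x # xs) = (uz u (-1) * e * uz u (- (-1))) * uz u (n-1)" using en xu by simp
    then have ?case using EE.cj[OF en(1), of "-1"] by blast }
  ultimately show ?case by blast
qed

lemma S_nf: "s \<in> S \<Longrightarrow> \<exists>e n. e \<in> EE u p \<and> s = e * uz u n"
  unfolding finite_products_def using nf by blast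

lemma S_mult: "s \<in> S \<Longrightarrow> t \<in> S \<Longrightarrow> s * t \<in> S"
  unfolding finite_products_def
  by clarsimp (metis Nil_is_append_conv Un_subset_iff prod_list.append set_append)

lemma S_adj: "s \<in> S \<Longrightarrow> adj s \<in> S"
proof -
  assume "s \<in> S"
  then obtain xs where xs: "xs \<noteq> []" "set xs \<subseteq> {p, u, adj u}" "s = prod_list xs"
    unfolding finite_products_def by auto
  have "set (rev (map adj xs)) \<subseteq> {p, u, adj u}" using xs(2) by (auto simp: sa adj_adj)
  moreover have "rev (map adj xs) \<noteq> []" using xs(1) by simp
  moreover have "adj s = prod_list (rev (map adj xs))" using xs(3) by (simp add: adj_prod_list)
  ultimately show ?thesis unfolding finite_products_def by blast
qed

lemma S_reg: "s \<in> S \<Longrightarrow> s * adj s * s = s"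
proof -
  assume "s \<in> S"
  then obtain e n where en: "e \<in> EE u p" "s = e * uz u n" using S_nf by blast
  have pe: "adj e = e" "e * e = e" using E_proj[OF en(1)] by auto
  have ee: "e * (e * x) = e * x" for x using pe by (metis mult.assoc)
  show ?thesis using en pe by (simp add: adj_mult adj_uz mult.assoc ee)
qed

lemma S_idem: "s \<in> S \<Longrightarrow> s * s = s \<Longrightarrow> s \<in> EE u p"
proof -
  assume sS: "s \<in> S" and ss: "s * s = s"
  then obtain e n where en: "e \<in> EE u p" "s = e * uz u n" using S_nf by blast
  define Q where "Q = uz u (-n) * e * uz u n"
  have QE: "Q \<in> EE u p" unfolding Q_def by (rule conj_in[OF en(1)])
  have pe: "adj e = e" "e * e = e" using E_proj[OF en(1)] by auto
  have pQ: "adj Q = Q" "Q * Q = Q" using E_proj[OF QE] by auto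
  have cQ: "e * Q = Q * e" using E_comm[OF en(1) QE] .
  have as: "adj s = uz u (-n) * e" using en pe by (simp add: adj_mult adj_uz)
  have ee: "e * (e * x) = e * x" for x using pe by (metis mult.assoc)
  have sQ: "adj s * s = Q"
  proof -
    have "adj s * s = uz u (-n) * e * s" by (simp add: as)
    also have "\<dots> = Q" using en(2) by (simp add: Q_def mult.assoc ee)
    finally show ?thesis .
  qed
  have 1: "Q = Q * e * uz u n"
  proof -
    have "Q = adj s * (s * s)" using sQ ss by simp
    also have "\<dots> = Q * s" using sQ by (simp only: mult.assoc[symmetric])
    finally show ?thesis using en by (simp add: mult.assoc)
  qed
  have 2: "Q = Q * e"
  proof -
    have "Q = Q * adj Q" using pQ by simp
    also have "\<dots> = (Q * e * uz u n) * adj (Q * e * uz u n)" using 1 by simp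
    also have "\<dots> = Q * (e * e) * Q" using pQ pe by (simp add: adj_mult adj_uz mult.assoc ee)
    also have "\<dots> = Q * (e * Q)" by (simp only: pe(2)) (simp only: mult.assoc)
    also have "\<dots> = Q * Q * e" using cQ by (simp add: mult.assoc)
    finally show ?thesis using pQ by simp
  qed
  have "Q * e * uz u n = Q * uz u n" by (simp only: 2[symmetric])
  then have 3: "Q = Q * uz u n" by (rule trans[OF 1])
  have "e = uz u n * Q * uz u (-n)" unfolding Q_def by (simp add: mult.assoc)
  also have "\<dots> = uz u n * Q * uz u n * uz u (-n)" by (subst (1) 3) (simp only: mult.assoc)
  also have "\<dots> = e * uz u n" unfolding Q_def by (simp add: mult.assoc)
  finally have "e = s" using en by simp
  then show ?thesis using en by simp
qed

end

lemma (in setting) inv_sg: "inverse_semigroup S"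
  unfolding inverse_semigroup_def
proof (intro conjI ballI)
  fix x y assume "x \<in> S" "y \<in> S" then show "x * y \<in> S" by (rule S_mult)
next
  fix s assume sS: "s \<in> S"
  have r1: "s * adj s * s = s" by (rule S_reg[OF sS])
  have r2: "adj s * s * adj s = adj s"
  proof -
    have "adj (s * adj s * s) = adj s * s * adj s" by (simp add: adj_mult adj_adj mult.assoc)
    then show ?thesis using r1 by simp
  qed
  have cl: "\<forall>x\<in>S. \<forall>y\<in>S. x * y \<in> S" using S_mult by blast
  have ic: "\<forall>e\<in>S. \<forall>f\<in>S. e * e = e \<longrightarrow> f * f = f \<longrightarrow> e * f = f * e"
    using S_idem E_comm by blast
  show "\<exists>!t. t \<in> S \<and> s * t * s = s \<and> t * s * t = t"
  proof (rule ex1I[where a="adj s"])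
    show "adj s \<in> S \<and> s * adj s * s = s \<and> adj s * s * adj s = adj s"
      using S_adj[OF sS] r1 r2 by simp
  next
    fix t assume t: "t \<in> S \<and> s * t * s = s \<and> t * s * t = t"
    show "t = adj s"
      by (rule inv_uniq[OF cl ic sS _ S_adj[OF sS]]) (use t r1 r2 in auto)
  qed
qed

lemma (in unitary) H_of_nat:
  assumes h: "\<forall>k::nat. p * (u ^ k * p * adj u ^ k) = (u ^ k * p * adj u ^ k) * p"
  shows "p * (uz u k * p * uz u (-k)) = (uz u k * p * uz u (-k)) * p"
proof (cases "k \<ge> 0")
  case True
  have a: "uz u k = u ^ nat k" using True by (simp add: uz_def)
  have b: "uz u (-k) = adj u ^ nat k"
  proof (cases "k = 0")
    case False then show ?thesis using True by (simp add: uz_def)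
  qed simp
  show ?thesis using h a b by simp
next
  case False
  define m where "m = nat (-k)"
  define a where "a = adj u ^ m"
  define b where "b = u ^ m"
  have ak: "uz u k = a" using False by (simp add: uz_def a_def m_def)
  have bk: "uz u (-k) = b" using False by (simp add: uz_def b_def m_def)
  have ab: "a * (b * x) = x" for x using pow_l[of m] by (simp add: a_def b_def flip: mult.assoc)
  have ba: "b * (a * x) = x" for x using pow_r[of m] by (simp add: a_def b_def flip: mult.assoc)
  have hq: "p * (b * (p * (a * x))) = b * (p * (a * (p * x)))" for x
  proof -
    have "p * (b * p * a) * x = (b * p * a) * p * x" using h[rule_format, of m] by (simp add: a_def b_def)
    then show ?thesis by (simp add: mult.assoc)
  qed
  have "p * (a * p * b) = a * (b * (p * (a * (p * b))))" by (simp add: ab mult.assoc)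
  also have "\<dots> = a * (p * (b * (p * (a * b))))" by (simp add: hq)
  also have "\<dots> = a * p * b * p" using ab[of 1] by (simp add: mult.assoc)
  finally show ?thesis unfolding ak bk by (simp add: mult.assoc)
qed

theorem proposition3p9:
  fixes p u :: "'a::cstar_algebra"
  assumes "wstar_algebra TYPE('a)"
    and "adj p = p" and "p * p = p"
    and "adj u * u = 1" and "u * adj u = 1"
  shows "inverse_semigroup (finite_products {p, u, adj u}) \<longleftrightarrow>
         (\<forall>k::nat. commutator p (u ^ k * p * adj u ^ k) = 0)"
proof -
  interpret unitary u using assms(4,5) by unfold_locales
  let ?S = "finite_products {p, u, adj u}"
  show ?thesis
  proof
    assume inv: "inverse_semigroup ?S"
    show "\<forall>k::nat. commutator p (u ^ k * p * adj u ^ k) = 0"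
    proof
      fix k :: nat
      let ?q = "u ^ k * p * adj u ^ k"
      have pS: "p \<in> ?S" unfolding finite_products_def
        by (rule CollectI, rule exI[where x="[p]"]) simp
      have "?q = prod_list (replicate k u @ [p] @ replicate k (adj u))"
        by (simp add: prod_list_replicate mult.assoc)
      moreover have "set (replicate k u @ [p] @ replicate k (adj u)) \<subseteq> {p, u, adj u}" by auto
      ultimately have qS: "?q \<in> ?S" unfolding finite_products_def by blast
      have qq: "?q * ?q = ?q"
      proof -
        have "?q * ?q = u ^ k * p * (adj u ^ k * u ^ k) * p * adj u ^ k" by (simp add: mult.assoc)
        then show ?thesis using pow_l[of k] assms(3) by (simp add: mult.assoc)
      qed
      have "p * ?q = ?q * p" by (rule idem_comm[OF inv pS qS assms(3) qq])
      then show "commutator p ?q = 0" by (simp add: commutator_def)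
    qed
  next
    assume c: "\<forall>k::nat. commutator p (u ^ k * p * adj u ^ k) = 0"
    then have h: "\<forall>k::nat. p * (u ^ k * p * adj u ^ k) = (u ^ k * p * adj u ^ k) * p"
      by (simp add: commutator_def)
    interpret setting u p
      using assms(2,3) H_of_nat[OF h] by unfold_locales auto
    show "inverse_semigroup ?S" by (rule inv_sg)
  qed
qed

end
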